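(* Let $\hat K$ be the triangle with vertices $(0,0),(1,0),(0,1)$, $\hat b=\hat x_1\hat x_2(1-\hat x_1-\hat x_2)$, and $j\ge1$. If $\hat\tau=\hat b\,p$ with $p\in P_j^{hom}(\hat K;\mathbb{S})$ and $\widehat{\mathrm{div}}\,\hat\tau=0$ on $\hat K$, then $\hat\tau=0$.
   Context: $\mathbb{S}$ is the space of real symmetric $2\times2$ matrices; $P_j^{hom}(\hat K;\mathbb{S})$ denotes $\mathbb{S}$-valued polynomials that are homogeneous of degree $j$ in $(\hat x_1,\hat x_2)$; the divergence of a matrix field is taken row-wise. *)

theory Defs
  imports "HOL-Analysis.Analysis"
begin

definition ref_triangle :: "(real \<times> real) set" where
  "ref_triangle = convex hull {(0,0), (1,0), (0,1)}"

definition bubble :: "real \<Rightarrow> real \<Rightarrow> real" where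
  "bubble x1 x2 = x1 * x2 * (1 - x1 - x2)"

definition hom_polys :: "nat \<Rightarrow> (real \<Rightarrow> real \<Rightarrow> real) set" where
  "hom_polys j = {f. \<exists>c :: nat \<Rightarrow> real. \<forall>x1 x2. f x1 x2 = (\<Sum>k\<le>j. c k * x1 ^ k * x2 ^ (j - k))}"

definition hom_sym_polys :: "nat \<Rightarrow> (real \<Rightarrow> real \<Rightarrow> real^2^2) set" where
  "hom_sym_polys j = {p. (\<forall>x1 x2. transpose (p x1 x2) = p x1 x2) \<and>
       (\<forall>i k. (\<lambda>x1 x2. p x1 x2 $ i $ k) \<in> hom_polys j)}"

definition partial1 :: "(real \<Rightarrow> real \<Rightarrow> real) \<Rightarrow> real \<Rightarrow> real \<Rightarrow> real" where
  "partial1 f x1 x2 = deriv (\<lambda>t. f t x2) x1"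
definition partial2 :: "(real \<Rightarrow> real \<Rightarrow> real) \<Rightarrow> real \<Rightarrow> real \<Rightarrow> real" where
  "partial2 f x1 x2 = deriv (\<lambda>t. f x1 t) x2"

definition mdiv :: "(real \<Rightarrow> real \<Rightarrow> real^2^2) \<Rightarrow> real \<Rightarrow> real \<Rightarrow> real^2" where
  "mdiv \<tau> x1 x2 = (\<chi> i. partial1 (\<lambda>a b. \<tau> a b $ i $ 1) x1 x2 + partial2 (\<lambda>a b. \<tau> a b $ i $ 2) x1 x2)"

end

theory Submission
  imports Defs "HOL-Computational_Algebra.Polynomial"
begin

definition hp :: "(nat \<Rightarrow> real) \<Rightarrow> nat \<Rightarrow> real \<Rightarrow> real \<Rightarrow> real" where
  "hp c j x y = (\<Sum>k\<le>j. c k * x ^ k * y ^ (j - k))"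
definition hp1 :: "(nat \<Rightarrow> real) \<Rightarrow> nat \<Rightarrow> real \<Rightarrow> real \<Rightarrow> real" where
  "hp1 c j x y = (\<Sum>k\<le>j. c k * (of_nat k * x ^ (k - 1)) * y ^ (j - k))"
definition hp2 :: "(nat \<Rightarrow> real) \<Rightarrow> nat \<Rightarrow> real \<Rightarrow> real \<Rightarrow> real" where
  "hp2 c j x y = (\<Sum>k\<le>j. c k * x ^ k * (of_nat (j - k) * y ^ (j - k - 1)))"

lemma hp_d1: "((\<lambda>t. hp c j t y) has_real_derivative hp1 c j x y) (at x)"
  unfolding hp_def hp1_def
  by (auto intro!: derivative_eq_intros sum.cong simp: mult_ac)

lemma hp_d2: "((\<lambda>t. hp c j x t) has_real_derivative hp2 c j x y) (at y)"
  unfolding hp_def hp2_def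
  by (auto intro!: derivative_eq_intros sum.cong simp: mult_ac)

lemma hp_diag: "((\<lambda>t. hp c j t (s - t)) has_real_derivative hp1 c j x (s - x) - hp2 c j x (s - x)) (at x)"
  unfolding hp_def hp1_def hp2_def
  by (auto intro!: derivative_eq_intros simp: sum_subtractf[symmetric] algebra_simps)

lemma hp_hom: "hp c j (t * x) (t * y) = t ^ j * hp c j x y"
  unfolding hp_def sum_distrib_left
proof (rule sum.cong)
  fix k assume "k \<in> {..j}"
  then have "t ^ j = t ^ k * t ^ (j - k)" by (simp add: power_add[symmetric])
  then show "c k * (t * x) ^ k * (t * y) ^ (j - k) = t ^ j * (c k * x ^ k * y ^ (j - k))"
    by (simp add: power_mult_distrib)
qed simp

lemma hp1_hom: "hp1 c (Suc m) (t * x) (t * y) = t ^ m * hp1 c (Suc m) x y"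
  unfolding hp1_def sum_distrib_left
proof (rule sum.cong)
  fix k assume k: "k \<in> {..Suc m}"
  show "c k * (of_nat k * (t * x) ^ (k - 1)) * (t * y) ^ (Suc m - k) =
        t ^ m * (c k * (of_nat k * x ^ (k - 1)) * y ^ (Suc m - k))"
  proof (cases k)
    case (Suc i)
    with k have "t ^ m = t ^ i * t ^ (Suc m - k)" by (simp add: power_add[symmetric])
    then show ?thesis using Suc by (simp add: power_mult_distrib)
  qed simp
qed simp

lemma hp2_hom: "hp2 c (Suc m) (t * x) (t * y) = t ^ m * hp2 c (Suc m) x y"
  unfolding hp2_def sum_distrib_left
proof (rule sum.cong)
  fix k assume k: "k \<in> {..Suc m}"
  show "c k * (t * x) ^ k * (of_nat (Suc m - k) * (t * y) ^ (Suc m - k - 1)) =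
        t ^ m * (c k * x ^ k * (of_nat (Suc m - k) * y ^ (Suc m - k - 1)))"
  proof (cases "k = Suc m")
    case False
    with k have "t ^ m = t ^ k * t ^ (Suc m - k - 1)" by (simp add: power_add[symmetric])
    then show ?thesis by (simp add: power_mult_distrib)
  qed simp
qed simp

lemma hp_zero:
  assumes "\<And>x. x > 0 \<Longrightarrow> hp c j x 1 = 0" "k \<le> j"
  shows "c k = 0"
proof -
  define q where "q = (\<Sum>i\<le>j. monom (c i) i)"
  have pq: "poly q x = hp c j x 1" for x
    unfolding q_def hp_def by (simp add: poly_sum poly_monom)
  have "q = 0"
  proof (rule ccontr)
    assume "q \<noteq> 0"
    then have "finite {x. poly q x = 0}" by (rule poly_roots_finite)
    moreover have "{0<..} \<subseteq> {x. poly q x = 0}" using assms pq by auto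
    ultimately show False
      using finite_subset infinite_Ioi by blast
  qed
  then have "coeff q k = 0" by simp
  moreover have "coeff q k = c k" unfolding q_def using assms(2)
    by (simp add: coeff_sum coeff_monom)
  ultimately show ?thesis by simp
qed

lemma tri_mem:
  assumes "0 \<le> x" "x \<le> 1" "0 \<le> t" "t \<le> 1"
  shows "(t * x, t * (1 - x)) \<in> ref_triangle"
proof -
  have "(t * x, t * (1 - x)) = (1 - t) *\<^sub>R (0::real,0::real) + (t * x) *\<^sub>R (1,0) + (t * (1 - x)) *\<^sub>R (0,1)"
    by simp
  moreover have "0 \<le> t * x" "0 \<le> t * (1 - x)" using assms by auto
  moreover have "0 \<le> 1 - t" "(1 - t) + t * x + t * (1 - x) = 1" using assms by (auto simp: algebra_simps)
  ultimately show ?thesis unfolding ref_triangle_def convex_hull_3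
    by blast
qed

definition row :: "nat \<Rightarrow> (nat \<Rightarrow> real) \<Rightarrow> (nat \<Rightarrow> real) \<Rightarrow> real \<Rightarrow> real \<Rightarrow> real" where
  "row j c d x y = (y*(1-x-y) - x*y) * hp c j x y + bubble x y * hp1 c j x y
     + (x*(1-x-y) - x*y) * hp d j x y + bubble x y * hp2 d j x y"

definition PP :: "nat \<Rightarrow> (nat \<Rightarrow> real) \<Rightarrow> (nat \<Rightarrow> real) \<Rightarrow> real \<Rightarrow> real \<Rightarrow> real" where
  "PP j c d x y = y * hp c j x y + x*y*hp1 c j x y + x * hp d j x y + x*y*hp2 d j x y"

lemma alg_id:
  fixes t x y A A1 B B2 T :: real
  shows "(t*y*(1-t*x-t*y) - t*x*(t*y)) * (t*T*A) + (t*x*(t*y)*(1-t*x-t*y)) * (T*A1)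
     + (t*x*(1-t*x-t*y) - t*x*(t*y)) * (t*T*B) + (t*x*(t*y)*(1-t*x-t*y)) * (T*B2)
   = t*t*T * (y*A + x*y*A1 + x*B + x*y*B2)
     - t*t*t*T * ((x+y)*(y*A + x*y*A1 + x*B + x*y*B2) + x*y*(A+B))"
  by algebra

lemma row_scale:
  "row (Suc m) c d (t*x) (t*y) = t*t*t^m * PP (Suc m) c d x y
     - t*t*t*t^m * ((x+y) * PP (Suc m) c d x y + x*y*(hp c (Suc m) x y + hp d (Suc m) x y))"
  unfolding row_def PP_def bubble_def hp_hom hp1_hom hp2_hom
  using alg_id[of t y x "t^m"] by simp

lemma key:
  assumes "\<And>x y. (x, y) \<in> ref_triangle \<Longrightarrow> row (Suc m) c d x y = 0"
  shows "\<And>k. k \<le> Suc m \<Longrightarrow> c k + d k = 0"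
    and "\<And>x. 0 \<le> x \<Longrightarrow> x \<le> 1 \<Longrightarrow> PP (Suc m) c d x (1 - x) = 0"
proof -
  have both: "PP (Suc m) c d x (1 - x) = 0 \<and> x*(1-x)*(hp c (Suc m) x (1-x) + hp d (Suc m) x (1-x)) = 0"
    if "0 \<le> x" "x \<le> 1" for x
  proof -
    define P where "P = PP (Suc m) c d x (1 - x)"
    define R where "R = x*(1-x)*(hp c (Suc m) x (1-x) + hp d (Suc m) x (1-x))"
    have r: "t*t*t^m * P - t*t*t*t^m * ((x + (1-x)) * P + R) = 0" if "0 \<le> t" "t \<le> 1" for t
      using assms[OF tri_mem[OF \<open>0 \<le> x\<close> \<open>x \<le> 1\<close> that]] row_scale[of m c d t x "1-x"]
      unfolding P_def R_def by simp
    have 1: "P - (P + R) = 0" using r[of 1] by simp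
    have "(1/2)*(1/2)*(1/2)^m * (P - (1/2) * (P + R)) = 0" using r[of "1/2"]
      by (simp add: algebra_simps)
    then have 2: "P - (1/2) * (P + R) = 0" by simp
    from 1 2 have "R = 0" "P = 0" by auto
    then show ?thesis unfolding P_def R_def by simp
  qed
  show "PP (Suc m) c d x (1 - x) = 0" if "0 \<le> x" "x \<le> 1" for x
    using both[OF that] by simp
  show "c k + d k = 0" if k: "k \<le> Suc m" for k
  proof (rule hp_zero[OF _ k])
    fix z :: real assume z: "z > 0"
    define x where "x = z / (1 + z)"
    have x01: "0 < x" "x < 1" using z unfolding x_def by auto
    have "1 - x = 1 / (1 + z)" using z unfolding x_def by (simp add: field_simps)
    have "hp c (Suc m) x (1-x) + hp d (Suc m) x (1-x) = 0"
      using both[of x] x01 by simp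
    then have "hp (\<lambda>k. c k + d k) (Suc m) x (1 - x) = 0"
      unfolding hp_def by (simp add: sum.distrib algebra_simps)
    moreover have "hp (\<lambda>k. c k + d k) (Suc m) ((1+z) * x) ((1+z) * (1 - x)) =
        (1+z)^Suc m * hp (\<lambda>k. c k + d k) (Suc m) x (1 - x)" by (rule hp_hom)
    moreover have "(1+z) * x = z" "(1+z) * (1-x) = 1" using z unfolding x_def by (auto simp: field_simps)
    ultimately show "hp (\<lambda>k. c k + d k) (Suc m) z 1 = 0" by simp
  qed
qed

lemma PP_neg:
  assumes "\<And>k. k \<le> j \<Longrightarrow> c k + d k = 0"
  shows "PP j c d x y = y * hp c j x y + x*y*hp1 c j x y - x * hp c j x y - x*y*hp2 c j x y"
proof -
  have dk: "\<And>k. k \<le> j \<Longrightarrow> d k = - c k" using assms by (simp add: eq_neg_iff_add_eq_0 add.commute)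
  have "hp d j x y = - hp c j x y" "hp2 d j x y = - hp2 c j x y"
    unfolding hp_def hp2_def sum_negf[symmetric] by (auto intro!: sum.cong simp: dk)
  then show ?thesis unfolding PP_def by simp
qed

lemma last_step:
  assumes "\<And>x. 0 \<le> x \<Longrightarrow> x \<le> 1 \<Longrightarrow> PP j c d x (1 - x) = 0"
    and "\<And>k. k \<le> j \<Longrightarrow> c k + d k = 0"
    and k: "k \<le> j"
  shows "c k = 0"
proof -
  define h where "h t = t * (1 - t) * hp c j t (1 - t)" for t
  have dh: "(h has_real_derivative PP j c d x (1 - x)) (at x)" for x
  proof -
    have "(h has_real_derivative (1 - x) * hp c j x (1 - x) - x * hp c j x (1 - x)
         + x * (1 - x) * (hp1 c j x (1 - x) - hp2 c j x (1 - x))) (at x)"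
      unfolding h_def
      by (rule derivative_eq_intros hp_diag[of c j 1 x] refl | simp add: algebra_simps)+
    moreover have "(1 - x) * hp c j x (1 - x) - x * hp c j x (1 - x)
         + x * (1 - x) * (hp1 c j x (1 - x) - hp2 c j x (1 - x)) = PP j c d x (1 - x)"
      using PP_neg[of j c d x "1 - x"] assms(2) by (simp add: algebra_simps)
    ultimately show ?thesis by simp
  qed
  have hz: "h x = 0" if "0 < x" "x < 1" for x
  proof -
    have "h x = h 0"
    proof (rule DERIV_isconst_end[OF that(1)])
      show "continuous_on {0..x} h"
        using dh by (meson DERIV_continuous continuous_at_imp_continuous_on)
      fix y assume "0 < y" "y < x"
      then show "(h has_real_derivative 0) (at y)" using dh[of y] assms(1)[of y] that by simp
    qed
    then show ?thesis unfolding h_def by simp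
  qed
  show ?thesis
  proof (rule hp_zero[OF _ k])
    fix z :: real assume z: "z > 0"
    define x where "x = z / (1 + z)"
    have x01: "0 < x" "x < 1" using z unfolding x_def by auto
    have "hp c j x (1-x) = 0"
      using hz[OF x01] x01 unfolding h_def by simp
    moreover have "hp c j ((1+z) * x) ((1+z) * (1 - x)) = (1+z)^j * hp c j x (1 - x)" by (rule hp_hom)
    moreover have "(1+z) * x = z" "(1+z) * (1-x) = 1" using z unfolding x_def by (auto simp: field_simps)
    ultimately show "hp c j z 1 = 0" by simp
  qed
qed


lemma bub_d1: "((\<lambda>t. bubble t y * hp c j t y) has_real_derivative
   (y*(1-x-y) - x*y) * hp c j x y + bubble x y * hp1 c j x y) (at x)"
  unfolding bubble_def
  by (rule derivative_eq_intros hp_d1 refl | simp add: algebra_simps)+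

lemma bub_d2: "((\<lambda>t. bubble x t * hp c j x t) has_real_derivative
   (x*(1-x-y) - x*y) * hp c j x y + bubble x y * hp2 c j x y) (at y)"
  unfolding bubble_def
  by (rule derivative_eq_intros hp_d2 refl | simp add: algebra_simps)+

lemma row_formula:
  assumes "\<And>a b. F a b = bubble a b * hp c j a b" "\<And>a b. G a b = bubble a b * hp d j a b"
  shows "partial1 F x y + partial2 G x y = row j c d x y"
proof -
  have "F = (\<lambda>a b. bubble a b * hp c j a b)" "G = (\<lambda>a b. bubble a b * hp d j a b)"
    using assms by (auto intro!: ext)
  then show ?thesis unfolding partial1_def partial2_def row_def
    using DERIV_imp_deriv[OF bub_d1[of y c j x]] DERIV_imp_deriv[OF bub_d2[of x d j y]]
    by simp
qed

lemma hp_zero_all: "(\<And>k. k \<le> j \<Longrightarrow> c k = 0) \<Longrightarrow> hp c j x y = 0"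
  unfolding hp_def by simp

theorem lemma4p5:
  fixes j :: nat and p \<tau> :: "real \<Rightarrow> real \<Rightarrow> real^2^2"
  assumes "j \<ge> 1"
    and "p \<in> hom_sym_polys j"
    and "\<And>x1 x2. \<tau> x1 x2 = bubble x1 x2 *\<^sub>R p x1 x2"
    and "\<And>x1 x2. (x1, x2) \<in> ref_triangle \<Longrightarrow> mdiv \<tau> x1 x2 = 0"
  shows "\<forall>x1 x2. \<tau> x1 x2 = 0"
proof -
  obtain m where j: "j = Suc m" using assms(1) by (cases j) auto
  have "\<forall>i k. \<exists>c. \<forall>x1 x2. p x1 x2 $ i $ k = hp c j x1 x2"
    using assms(2) unfolding hom_sym_polys_def hom_polys_def hp_def by auto
  then obtain co where co: "\<And>i k x1 x2. p x1 x2 $ i $ k = hp (co i k) j x1 x2"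
    by metis
  have sym: "p x1 x2 $ 2 $ 1 = p x1 x2 $ 1 $ 2" for x1 x2
  proof -
    have "transpose (p x1 x2) $ 2 $ 1 = p x1 x2 $ 2 $ 1"
      using assms(2) unfolding hom_sym_polys_def by simp
    then show ?thesis unfolding transpose_def by simp
  qed
  have te: "\<tau> a b $ i $ k = bubble a b * hp (co i k) j a b" for a b i k
    using assms(3) co by simp
  have te21: "\<tau> a b $ 2 $ 1 = bubble a b * hp (co 1 2) j a b" for a b
    using assms(3) co sym by simp
  have r1: "row j (co 1 1) (co 1 2) x y = 0" if "(x, y) \<in> ref_triangle" for x y
  proof -
    have "mdiv \<tau> x y $ 1 = 0" using assms(4)[OF that] by simp
    then show ?thesis unfolding mdiv_def using row_formula[of "\<lambda>a b. \<tau> a b $ 1 $ 1" "co 1 1" j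
        "\<lambda>a b. \<tau> a b $ 1 $ 2" "co 1 2" x y] te by simp
  qed
  have r2: "row j (co 1 2) (co 2 2) x y = 0" if "(x, y) \<in> ref_triangle" for x y
  proof -
    have "mdiv \<tau> x y $ 2 = 0" using assms(4)[OF that] by simp
    then show ?thesis unfolding mdiv_def using row_formula[of "\<lambda>a b. \<tau> a b $ 2 $ 1" "co 1 2" j
        "\<lambda>a b. \<tau> a b $ 2 $ 2" "co 2 2" x y] te te21 by simp
  qed
  have k1: "\<And>k. k \<le> j \<Longrightarrow> co 1 1 k + co 1 2 k = 0"
    "\<And>x. 0 \<le> x \<Longrightarrow> x \<le> 1 \<Longrightarrow> PP j (co 1 1) (co 1 2) x (1 - x) = 0"
    using key[of m "co 1 1" "co 1 2"] r1 unfolding j by auto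
  have k2: "\<And>k. k \<le> j \<Longrightarrow> co 1 2 k + co 2 2 k = 0"
    using key(1)[of m "co 1 2" "co 2 2"] r2 unfolding j by auto
  have z11: "co 1 1 k = 0" if "k \<le> j" for k
    using last_step[OF k1(2) k1(1) that] by simp
  have z12: "co 1 2 k = 0" if "k \<le> j" for k using z11[OF that] k1(1)[OF that] by simp
  have z22: "co 2 2 k = 0" if "k \<le> j" for k using z12[OF that] k2[OF that] by simp
  have "p x1 x2 = 0" for x1 x2
  proof -
    have "p x1 x2 $ 1 $ 1 = 0" "p x1 x2 $ 1 $ 2 = 0" "p x1 x2 $ 2 $ 2 = 0"
      using co hp_zero_all z11 z12 z22 by metis+
    then show ?thesis using sym[of x1 x2] by (simp add: vec_eq_iff forall_2)
  qed
  then show ?thesis using assms(3) by simp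
qed

end
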